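(* Let $p\ge3$ be a prime, $n\ge2$, and $N=p^nN_1$ with either $N_1=1$ or $N_1=q_1\cdots q_r$, $q_1,\dots,q_r$ distinct primes different from $p$ with $\gcd(p,q_i-1)=1$. Let $\mathbf{s}$ be a Zadoff–Chu sequence of length $N$ and let $\pi(x)=x^p+ax+b\in\mathbb{Z}_N[x]$ be a permutation polynomial over $\mathbb{Z}_N$ with $a\not\equiv0,-1\pmod p$. Then (i) the sequences $\mathbf{s}\circ\pi$ and $\mathbf{s}\circ\pi^{-1}$ are each inequivalent to ZC sequences, i.e., neither lies in the equivalence class of any Zadoff–Chu sequence of length $N$; (ii) the sequence $\mathbf{s}\circ\pi$ lies neither in the equivalence class of any sequence $\mathbf{s}'\circ\pi'$ nor in that of any sequence $\mathbf{s}'\circ\pi'^{-1}$, where $\mathbf{s}'$ is a Zadoff–Chu sequence of length $N$ and $\pi'$ is a quadratic permutation polynomial over $\mathbb{Z}_N$.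
   Context: $\xi_N=e^{-2\pi\sqrt{-1}/N}$, $\xi_N^{x/2}=e^{-\pi\sqrt{-1}x/N}$. A Zadoff–Chu sequence of length $N$ is $s(k)=\xi_N^{u(k^2+(N\bmod2)k+2lk)/2}$, $0\le k<N$, with $\gcd(u,N)=1$ and $l$ an integer. A permutation polynomial over $\mathbb{Z}_N$ induces a bijection $k\mapsto\pi(k)\bmod N$ of $\mathbb{Z}_N$; $\pi^{-1}$ is the inverse permutation; $(\mathbf{s}\circ\sigma)(k)=s(\sigma(k))$. A quadratic permutation polynomial is a permutation polynomial $f_2x^2+f_1x+f_0$. The equivalence class of a length-$N$ sequence $\mathbf{x}$ is the set of all sequences obtained from $\mathbf{x}$ by composing: rotation $y(k)=c\,x(k)$, $|c|=1$; translation $y(k)=x(k+d\bmod N)$; decimation $y(k)=x(ak\bmod N)$ with $\gcd(a,N)=1$; linear frequency modulation $y(k)=\xi_N^{lk}x(k)$, $l$ an integer; conjugation $y(k)=x^*(k)$. *)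

theory Defs
  imports Complex_Main "HOL-Computational_Algebra.Primes"
begin

text \<open>Sequences of length N are functions int => complex, only the values
 at indices 0..N-1 matter.\<close>

text \<open>xi_N^(x/2) = exp(-pi i x / N)\<close>
definition xi_half :: "int \<Rightarrow> int \<Rightarrow> complex" where
  "xi_half N x = cis (- pi * real_of_int x / real_of_int N)"

definition zc_seq :: "int \<Rightarrow> int \<Rightarrow> int \<Rightarrow> int \<Rightarrow> complex" where
  "zc_seq N u l k = xi_half N (u * (k^2 + (N mod 2) * k + 2 * l * k))"

definition is_ZC :: "int \<Rightarrow> (int \<Rightarrow> complex) \<Rightarrow> bool" where
  "is_ZC N s \<longleftrightarrow> (\<exists>u l. coprime u N \<and> (\<forall>k\<in>{0..<N}. s k = zc_seq N u l k))"

definition perm_poly :: "int \<Rightarrow> (int \<Rightarrow> int) \<Rightarrow> bool" where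
  "perm_poly N f \<longleftrightarrow> bij_betw (\<lambda>k. f k mod N) {0..<N} {0..<N}"

definition quad_perm_poly :: "int \<Rightarrow> int \<Rightarrow> int \<Rightarrow> int \<Rightarrow> bool" where
  "quad_perm_poly N f2 f1 f0 \<longleftrightarrow> f2 mod N \<noteq> 0 \<and>
     perm_poly N (\<lambda>x. f2 * x^2 + f1 * x + f0)"

definition comp_perm :: "int \<Rightarrow> (int \<Rightarrow> complex) \<Rightarrow> (int \<Rightarrow> int) \<Rightarrow> int \<Rightarrow> complex" where
  "comp_perm N s f k = s (f k mod N)"

definition comp_inv_perm :: "int \<Rightarrow> (int \<Rightarrow> complex) \<Rightarrow> (int \<Rightarrow> int) \<Rightarrow> int \<Rightarrow> complex" where
  "comp_inv_perm N s f k = s (the_inv_into {0..<N} (\<lambda>x. f x mod N) k)"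

inductive equiv_seq :: "int \<Rightarrow> (int \<Rightarrow> complex) \<Rightarrow> (int \<Rightarrow> complex) \<Rightarrow> bool" for N where
  base: "(\<forall>k\<in>{0..<N}. y k = x k) \<Longrightarrow> equiv_seq N x y"
| rot: "equiv_seq N x y \<Longrightarrow> norm c = 1 \<Longrightarrow> (\<forall>k\<in>{0..<N}. z k = c * y k) \<Longrightarrow> equiv_seq N x z"
| transl: "equiv_seq N x y \<Longrightarrow> (\<forall>k\<in>{0..<N}. z k = y ((k + d) mod N)) \<Longrightarrow> equiv_seq N x z"
| decim: "equiv_seq N x y \<Longrightarrow> coprime a N \<Longrightarrow> (\<forall>k\<in>{0..<N}. z k = y ((a * k) mod N)) \<Longrightarrow> equiv_seq N x z"
| lfm: "equiv_seq N x y \<Longrightarrow> (\<forall>k\<in>{0..<N}. z k = xi_half N (2 * l * k) * y k) \<Longrightarrow> equiv_seq N x z"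
| conj: "equiv_seq N x y \<Longrightarrow> (\<forall>k\<in>{0..<N}. z k = cnj (y k)) \<Longrightarrow> equiv_seq N x z"

end

theory Submission
  imports Defs
begin

lemma xi_mult: "xi_half N x * xi_half N y = xi_half N (x + y)"
  unfolding xi_half_def cis_mult by (simp add: diff_divide_distrib add_divide_distrib algebra_simps)

lemma xi_cnj: "cnj (xi_half N x) = xi_half N (- x)"
  unfolding xi_half_def cis_cnj by simp

lemma xi_nz: "xi_half N x \<noteq> 0"
proof
  assume "xi_half N x = 0"
  then have "norm (xi_half N x) = 0" by simp
  then show False unfolding xi_half_def by simp
qed

lemma xi_period: assumes "N \<noteq> 0" shows "xi_half N (2 * N * m) = 1"
proof -
  have "- pi * real_of_int (2 * N * m) / real_of_int N = 2 * pi * real_of_int (- m)"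
    using assms by (simp add: field_simps)
  moreover have "cis (2 * pi * real_of_int (- m)) = 1" by (rule cis_multiple_2pi) simp
  ultimately show ?thesis unfolding xi_half_def by simp
qed

lemma xi_cong: assumes "N \<noteq> 0" "(2 * N) dvd (x - y)" shows "xi_half N x = xi_half N y"
proof -
  obtain m where m: "x - y = 2 * N * m" using assms(2) by (auto elim!: dvdE)
  have "xi_half N x = xi_half N (y + 2 * N * m)" using m by (simp add: algebra_simps)
  also have "\<dots> = xi_half N y * xi_half N (2 * N * m)" by (simp add: xi_mult)
  also have "\<dots> = xi_half N y" using xi_period[OF assms(1)] by simp
  finally show ?thesis .
qed

lemma xi_inj: assumes "N > 0" "xi_half N x = xi_half N y" shows "(2 * N) dvd (x - y)"
proof -
  have "xi_half N (x - y) = xi_half N x * xi_half N (- y)" by (simp add: xi_mult)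
  also have "\<dots> = xi_half N y * xi_half N (- y)" using assms by simp
  also have "\<dots> = 1" by (subst xi_mult) (simp add: xi_half_def)
  finally have "cis (- pi * real_of_int (x - y) / real_of_int N) = 1" unfolding xi_half_def .
  then have "cos (- pi * real_of_int (x - y) / real_of_int N) = 1"
    by (metis cis.sel(1) one_complex.simps(1))
  then obtain n :: int where n: "- pi * real_of_int (x - y) / real_of_int N = real_of_int n * 2 * pi"
    using cos_one_2pi_int by blast
  then have "pi * (real_of_int (x - y) + real_of_int N * real_of_int n * 2) = 0"
    using assms(1) by (simp add: field_simps)
  then have "real_of_int (x - y) + real_of_int N * real_of_int n * 2 = 0" by simp
  then have "real_of_int (x - y) = real_of_int (- 2 * N * n)" by simp
  then have "x - y = (2 * N) * (- n)" by (simp only: of_int_eq_iff)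
  then show ?thesis by simp
qed

lemma per_mult:
  fixes Y :: "int \<Rightarrow> 'a"
  assumes "\<forall>k. Y (k + N) = Y k" shows "Y (k + N * j) = Y k"
proof (induction j rule: int_induct[where k = 0])
  case base then show ?case by simp
next
  case (step1 i)
  have "Y (k + N * (i + 1)) = Y ((k + N * i) + N)" by (simp add: algebra_simps)
  then show ?case using assms step1 by simp
next
  case (step2 i)
  have "Y (k + N * i) = Y ((k + N * (i - 1)) + N)" by (simp add: algebra_simps)
  then show ?case using assms step2 by simp
qed

lemma per_mod:
  fixes Y :: "int \<Rightarrow> 'a"
  assumes "\<forall>k. Y (k + N) = Y k" shows "Y (k mod N) = Y k"
proof -
  have "Y (k mod N + N * (k div N)) = Y (k mod N)" by (rule per_mult[OF assms])
  then show ?thesis by simp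
qed

lemma per_agree:
  fixes Y Z :: "int \<Rightarrow> 'a"
  assumes "\<forall>k. Y (k + N) = Y k" "\<forall>k. Z (k + N) = Z k" "N > 0" "\<forall>k\<in>{0..<N}. Y k = Z k"
  shows "Y k = Z k"
proof -
  have "k mod N \<in> {0..<N}" using assms(3) by simp
  then have "Y (k mod N) = Z (k mod N)" using assms(4) by blast
  then show ?thesis using per_mod[OF assms(1)] per_mod[OF assms(2)] by simp
qed

lemma zc_shift: assumes "N > 0" shows "zc_seq N u l (k + N * j) = zc_seq N u l k"
proof -
  have ev: "even (N * j^2 + (N mod 2) * j)"
    by (cases "even N"; cases "even j") (auto simp: power2_eq_square odd_iff_mod_2_eq_one)
  then obtain t where t: "N * j^2 + (N mod 2) * j = 2 * t" by blast
  have "u * ((k + N * j)^2 + (N mod 2) * (k + N * j) + 2 * l * (k + N * j))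
        - u * (k^2 + (N mod 2) * k + 2 * l * k)
      = u * (2 * k * N * j + N * (N * j^2 + (N mod 2) * j) + 2 * l * N * j)"
    by (simp add: power2_eq_square algebra_simps)
  also have "\<dots> = (2 * N) * (u * (k * j + t + l * j))" using t by (simp add: algebra_simps)
  finally show ?thesis unfolding zc_seq_def using assms by (intro xi_cong) auto
qed

lemma zc_per: assumes "N > 0" shows "\<forall>k. zc_seq N u l (k + N) = zc_seq N u l k"
  using zc_shift[OF assms, of u l _ 1] by simp

lemma zc_mod: assumes "N > 0" shows "zc_seq N u l (k mod N) = zc_seq N u l k"
  using per_mod[OF zc_per[OF assms]] by blast

lemma binom_cong: fixes q :: int shows "q^2 dvd ((1 + q)^m - 1 - int m * q)"
proof (induction m)
  case 0 then show ?case by simp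
next
  case (Suc m)
  then obtain t where t: "(1 + q)^m - 1 - int m * q = q^2 * t" by (auto elim!: dvdE)
  have "(1 + q)^(Suc m) - 1 - int (Suc m) * q = (1 + q) * ((1 + q)^m - 1 - int m * q) + q^2 * int m"
    by (simp add: power2_eq_square algebra_simps)
  also have "\<dots> = q^2 * ((1 + q) * t + int m)" using t by (simp add: algebra_simps)
  finally show ?case by simp
qed

lemma core:
  fixes p :: nat and a b U V A B :: int and R :: "int \<Rightarrow> int"
  assumes pr: "prime p" and p2: "p > 2" and U: "\<not> int p dvd U" and al: "\<not> int p dvd (1 + a)"
    and H: "\<forall>k. (int p)^2 dvd (U * (k^p + a*k + b)^2 + V * (k^p + a*k + b) - (A*k^2 + B*k + R k))"
    and HR1: "\<forall>k. (int p)^2 dvd (R (k + int p) - R k)"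
    and HR2: "\<forall>k. int p dvd (R k - R 0)"
  shows False
proof -
  define q where "q = int p"
  have q2: "q > 2" using p2 q_def by simp
  have qpr: "prime q" using pr q_def by simp
  obtain e where e: "(1 + q)^p = 1 + q^2 * e"
  proof -
    have "q^2 dvd ((1 + q)^p - 1 - q * q)" using binom_cong[of q p] q_def by simp
    then have "q^2 dvd ((1 + q)^p - 1)"
      by (metis (no_types, lifting) diff_add_cancel dvd_add power2_eq_square dvd_refl)
    then obtain e where "(1 + q)^p - 1 = q^2 * e" by (auto elim!: dvdE)
    then show ?thesis using that[of e] by (simp add: algebra_simps)
  qed
  define f where "f = q^(p-2)"
  have f: "q^p = q^2 * f"
  proof -
    have "p = 2 + (p - 2)" using p2 by simp
    then have "q^p = q^(2 + (p - 2))" by simp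
    then show ?thesis unfolding f_def by (simp only: power_add)
  qed
  have odd: "odd p" using prime_odd_nat[OF pr p2] .
  have m1: "(-1::int)^p = -1" using odd by simp
  have "(int p)^2 dvd (U * (0^p + a*0 + b)^2 + V * (0^p + a*0 + b) - (A*0^2 + B*0 + R 0))"
    using H by blast
  then obtain m0 where E0: "U * b^2 + V * b - R 0 = q^2 * m0"
    using p2 by (auto simp: q_def zero_power elim!: dvdE)
  have "(int p)^2 dvd (U * (1^p + a*1 + b)^2 + V * (1^p + a*1 + b) - (A*1^2 + B*1 + R 1))"
    using H by blast
  then obtain m1 where E1: "U * (1 + a + b)^2 + V * (1 + a + b) - (A + B + R 1) = q^2 * m1"
    by (auto simp: q_def elim!: dvdE)
  have "(int p)^2 dvd (U * ((-1)^p + a*(-1) + b)^2 + V * ((-1)^p + a*(-1) + b) - (A*(-1)^2 + B*(-1) + R (-1)))"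
    using H by blast
  then obtain mm1 where Em1: "U * (-1 - a + b)^2 + V * (-1 - a + b) - (A - B + R (-1)) = q^2 * mm1"
    using m1 by (auto simp: q_def elim!: dvdE)
  have "(int p)^2 dvd (U * (q^p + a*q + b)^2 + V * (q^p + a*q + b) - (A*q^2 + B*q + R q))"
    using H by blast
  then obtain mp where Ep: "U * (q^2 * f + a*q + b)^2 + V * (q^2 * f + a*q + b) - (A*q^2 + B*q + R q) = q^2 * mp"
    using f by (auto simp: q_def elim!: dvdE)
  have "(int p)^2 dvd (U * ((1 + q)^p + a*(1 + q) + b)^2 + V * ((1 + q)^p + a*(1 + q) + b) - (A*(1 + q)^2 + B*(1 + q) + R (1 + q)))"
    using H by blast
  then obtain mp1 where Ep1: "U * (1 + q^2 * e + a*(1 + q) + b)^2 + V * (1 + q^2 * e + a*(1 + q) + b) - (A*(1 + q)^2 + B*(1 + q) + R (1 + q)) = q^2 * mp1"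
    using e by (auto simp: q_def elim!: dvdE)
  have "q^2 dvd (R (0 + q) - R 0)" using HR1 unfolding q_def by blast
  then obtain r1 where "R q - R 0 = q^2 * r1" by (auto elim!: dvdE)
  then have r1: "R q = R 0 + q^2 * r1" by simp
  have "q^2 dvd (R (1 + q) - R 1)" using HR1 unfolding q_def by blast
  then obtain r2 where "R (1 + q) - R 1 = q^2 * r2" by (auto elim!: dvdE)
  then have r2: "R (1 + q) = R 1 + q^2 * r2" by simp
  have "q dvd (R 1 - R 0)" using HR2 unfolding q_def by blast
  then obtain s1 where "R 1 - R 0 = q * s1" by (auto elim!: dvdE)
  then have s1: "R 1 = R 0 + q * s1" by simp
  have "q dvd (R (-1) - R 0)" using HR2 unfolding q_def by blast
  then obtain s2 where "R (-1) - R 0 = q * s2" by (auto elim!: dvdE)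
  then have s2: "R (-1) = R 0 + q * s2" by simp
  define al where "al = 1 + a"
  define d1 where "d1 = q * (a + q * e)"
  define d0 where "d0 = q * (a + q * f)"
  define W1 where "W1 = a * U * q * (e - f) + e * (2 * U * (al + b) + V + U * d1) - f * (2 * U * b + V + U * d0)"
  define M where "M = r2 - r1 + mp1 - m1 - mp + m0"
  have X1: "q * (2 * a * U * al - 2 * A) = q * (q * (M - W1))"
    using E0 E1 Ep Ep1 r1 r2 unfolding M_def W1_def d1_def d0_def al_def
    by (simp add: power2_eq_square algebra_simps)
  have qnz: "q \<noteq> 0" using q2 by simp
  have D1: "q dvd (2 * a * U * al - 2 * A)" using X1 qnz by simp
  have X2: "2 * U * al^2 - 2 * A = q * (s1 + s2 + q * (m1 + mm1 - 2 * m0))"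
    using E0 E1 Em1 s1 s2 unfolding al_def
    by (simp add: power2_eq_square algebra_simps)
  have D2: "q dvd (2 * U * al^2 - 2 * A)" using X2 by simp
  have "q dvd ((2 * U * al^2 - 2 * A) - (2 * a * U * al - 2 * A))" using D2 D1 by (rule dvd_diff)
  moreover have "(2 * U * al^2 - 2 * A) - (2 * a * U * al - 2 * A) = 2 * (U * al)"
    unfolding al_def by (simp add: power2_eq_square algebra_simps)
  ultimately have "q dvd 2 * (U * al)" by simp
  then have "q dvd 2 \<or> q dvd U \<or> q dvd al" using qpr by (simp add: prime_dvd_mult_iff)
  moreover have "\<not> q dvd 2" using q2 by (auto dest: zdvd_imp_le)
  ultimately show False using U al unfolding q_def al_def by blast
qed

definition quadlike :: "int \<Rightarrow> bool \<Rightarrow> (int \<Rightarrow> int) \<Rightarrow> bool" where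
  "quadlike p st G \<longleftrightarrow> (\<exists>A B R. (st \<longrightarrow> \<not> p dvd A) \<and> (\<forall>k. G k = A*k^2 + B*k + R k)
     \<and> (\<forall>k j. p^2 dvd (R (k + p*j) - R k)) \<and> (\<forall>k. p dvd (R k - R 0)))"

definition Inv :: "int \<Rightarrow> int \<Rightarrow> bool \<Rightarrow> (int \<Rightarrow> complex) \<Rightarrow> bool" where
  "Inv N p st y \<longleftrightarrow> (\<exists>Y c G. (\<forall>k. Y (k + N) = Y k) \<and> (\<forall>k\<in>{0..<N}. y k = Y k)
     \<and> (\<forall>k. Y k = c * xi_half N (G k)) \<and> quadlike p st G)"

lemma ql_shift: assumes "quadlike p st G" shows "quadlike p st (\<lambda>k. G (k + d))"
proof -
  obtain A B R where st: "st \<longrightarrow> \<not> p dvd A" and G: "\<forall>k. G k = A*k^2 + B*k + R k"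
    and R1: "\<forall>k j. p^2 dvd (R (k + p*j) - R k)" and R2: "\<forall>k. p dvd (R k - R 0)"
    using assms unfolding quadlike_def by blast
  define R' where "R' = (\<lambda>k. R (k + d) + A*d^2 + B*d)"
  have "\<forall>k. G (k + d) = A*k^2 + (B + 2*A*d)*k + R' k"
    using G unfolding R'_def by (simp add: power2_eq_square algebra_simps)
  moreover have "\<forall>k j. p^2 dvd (R' (k + p*j) - R' k)"
  proof (intro allI)
    fix k j
    have "p^2 dvd (R ((k + d) + p*j) - R (k + d))" using R1 by blast
    then show "p^2 dvd (R' (k + p*j) - R' k)" unfolding R'_def by (simp add: algebra_simps)
  qed
  moreover have "\<forall>k. p dvd (R' k - R' 0)"
  proof
    fix k
    have "p dvd ((R (k + d) - R 0) - (R d - R 0))" using R2 by (blast intro: dvd_diff)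
    then show "p dvd (R' k - R' 0)" unfolding R'_def by simp
  qed
  ultimately show ?thesis unfolding quadlike_def using st by blast
qed

lemma ql_scale: assumes "quadlike p st G" "prime p" "st \<longrightarrow> \<not> p dvd a"
  shows "quadlike p st (\<lambda>k. G (a * k))"
proof -
  obtain A B R where st: "st \<longrightarrow> \<not> p dvd A" and G: "\<forall>k. G k = A*k^2 + B*k + R k"
    and R1: "\<forall>k j. p^2 dvd (R (k + p*j) - R k)" and R2: "\<forall>k. p dvd (R k - R 0)"
    using assms unfolding quadlike_def by blast
  have "\<forall>k. G (a * k) = (A*a^2)*k^2 + (B*a)*k + R (a * k)"
    using G by (simp add: power2_eq_square algebra_simps)
  moreover have "\<forall>k j. p^2 dvd (R (a * (k + p*j)) - R (a * k))"
  proof (intro allI)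
    fix k j
    have "p^2 dvd (R (a * k + p*(a * j)) - R (a * k))" using R1 by blast
    then show "p^2 dvd (R (a * (k + p*j)) - R (a * k))" by (simp add: algebra_simps)
  qed
  moreover have "\<forall>k. p dvd (R (a * k) - R (a * 0))" using R2 by simp
  moreover have "st \<longrightarrow> \<not> p dvd (A * a^2)"
    using st assms(2,3) by (auto simp: prime_dvd_mult_iff prime_dvd_power_iff)
  ultimately show ?thesis unfolding quadlike_def
    by (intro exI[of _ "A*a^2"] exI[of _ "B*a"] exI[of _ "\<lambda>k. R (a * k)"]) auto
qed

lemma ql_neg: assumes "quadlike p st G" shows "quadlike p st (\<lambda>k. - G k)"
proof -
  obtain A B R where st: "st \<longrightarrow> \<not> p dvd A" and G: "\<forall>k. G k = A*k^2 + B*k + R k"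
    and R1: "\<forall>k j. p^2 dvd (R (k + p*j) - R k)" and R2: "\<forall>k. p dvd (R k - R 0)"
    using assms unfolding quadlike_def by blast
  have "\<forall>k. - G k = (- A)*k^2 + (- B)*k + (- R k)" using G by simp
  moreover have "\<forall>k j. p^2 dvd (- R (k + p*j) - (- R k))"
  proof (intro allI)
    fix k j
    have "p^2 dvd - (R (k + p*j) - R k)" using R1 by (simp only: dvd_minus_iff)
    then show "p^2 dvd (- R (k + p*j) - (- R k))" by simp
  qed
  moreover have "\<forall>k. p dvd (- R k - (- R 0))"
  proof
    fix k
    have "p dvd - (R k - R 0)" using R2 by (simp only: dvd_minus_iff)
    then show "p dvd (- R k - (- R 0))" by simp
  qed
  moreover have "st \<longrightarrow> \<not> p dvd (- A)" using st by simp
  ultimately show ?thesis unfolding quadlike_def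
    by (intro exI[of _ "- A"] exI[of _ "- B"] exI[of _ "\<lambda>k. - R k"]) auto
qed

lemma ql_lin: assumes "quadlike p st G" shows "quadlike p st (\<lambda>k. G k + L * k)"
proof -
  obtain A B R where st: "st \<longrightarrow> \<not> p dvd A" and G: "\<forall>k. G k = A*k^2 + B*k + R k"
    and R1: "\<forall>k j. p^2 dvd (R (k + p*j) - R k)" and R2: "\<forall>k. p dvd (R k - R 0)"
    using assms unfolding quadlike_def by blast
  have "\<forall>k. G k + L * k = A*k^2 + (B + L)*k + R k" using G by (simp add: algebra_simps)
  then show ?thesis unfolding quadlike_def using st R1 R2 by blast
qed

lemma Inv_equiv:
  assumes "equiv_seq N x y" "Inv N p st x" "N > 0" "p dvd N" "prime p"
  shows "Inv N p st y"
  using assms(1,2)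
proof (induction rule: equiv_seq.induct)
  case (base y x)
  then obtain Y c G where Y: "\<forall>k. Y (k + N) = Y k" "\<forall>k\<in>{0..<N}. x k = Y k"
     "\<forall>k. Y k = c * xi_half N (G k)" "quadlike p st G" unfolding Inv_def by blast
  have "\<forall>k\<in>{0..<N}. y k = Y k" using Y(2) base(1) by simp
  then show ?case unfolding Inv_def using Y(1,3,4) by blast
next
  case (rot x y c0 z)
  then obtain Y c G where Y: "\<forall>k. Y (k + N) = Y k" "\<forall>k\<in>{0..<N}. y k = Y k"
     "\<forall>k. Y k = c * xi_half N (G k)" "quadlike p st G" unfolding Inv_def by blast
  have "\<forall>k. c0 * Y (k + N) = c0 * Y k" using Y by simp
  moreover have "\<forall>k\<in>{0..<N}. z k = c0 * Y k" using Y rot by simp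
  moreover have "\<forall>k. c0 * Y k = (c0 * c) * xi_half N (G k)" using Y by simp
  ultimately show ?case unfolding Inv_def using Y(4)
    by (intro exI[of _ "\<lambda>k. c0 * Y k"] exI[of _ "c0 * c"] exI[of _ G]) blast
next
  case (transl x y z d)
  then obtain Y c G where Y: "\<forall>k. Y (k + N) = Y k" "\<forall>k\<in>{0..<N}. y k = Y k"
     "\<forall>k. Y k = c * xi_half N (G k)" "quadlike p st G" unfolding Inv_def by blast
  have "\<forall>k. Y (k + N + d) = Y (k + d)"
  proof
    fix k
    have "k + N + d = (k + d) + N" by simp
    then show "Y (k + N + d) = Y (k + d)" using Y(1) by metis
  qed
  moreover have "\<forall>k\<in>{0..<N}. z k = Y (k + d)"
  proof
    fix k assume "k \<in> {0..<N}"
    then have "z k = y ((k + d) mod N)" using transl by blast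
    also have "\<dots> = Y ((k + d) mod N)" using Y(2) assms(3) by simp
    also have "\<dots> = Y (k + d)" using per_mod[OF Y(1)] by simp
    finally show "z k = Y (k + d)" .
  qed
  moreover have "\<forall>k. Y (k + d) = c * xi_half N (G (k + d))" using Y by simp
  ultimately show ?case unfolding Inv_def using ql_shift[OF Y(4), of d]
    by (intro exI[of _ "\<lambda>k. Y (k + d)"] exI[of _ c] exI[of _ "\<lambda>k. G (k + d)"]) blast
next
  case (decim x y a z)
  then obtain Y c G where Y: "\<forall>k. Y (k + N) = Y k" "\<forall>k\<in>{0..<N}. y k = Y k"
     "\<forall>k. Y k = c * xi_half N (G k)" "quadlike p st G" unfolding Inv_def by blast
  have "\<forall>k. Y (a * (k + N)) = Y (a * k)"
  proof
    fix k
    have "Y (a * k + N * a) = Y (a * k)" by (rule per_mult[OF Y(1)])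
    then show "Y (a * (k + N)) = Y (a * k)" by (simp add: algebra_simps)
  qed
  moreover have "\<forall>k\<in>{0..<N}. z k = Y (a * k)"
  proof
    fix k assume "k \<in> {0..<N}"
    then have "z k = y ((a * k) mod N)" using decim by blast
    also have "\<dots> = Y ((a * k) mod N)" using Y(2) assms(3) by simp
    also have "\<dots> = Y (a * k)" using per_mod[OF Y(1)] by simp
    finally show "z k = Y (a * k)" .
  qed
  moreover have "\<forall>k. Y (a * k) = c * xi_half N (G (a * k))" using Y by simp
  moreover have "\<not> p dvd a"
  proof
    assume "p dvd a"
    then have "is_unit p" using decim(2) assms(4) coprime_common_divisor by blast
    then show False using assms(5) not_prime_unit by blast
  qed
  ultimately show ?case unfolding Inv_def using ql_scale[OF Y(4) assms(5), of a]
    by (intro exI[of _ "\<lambda>k. Y (a * k)"] exI[of _ c] exI[of _ "\<lambda>k. G (a * k)"]) blast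
next
  case (lfm x y z l)
  then obtain Y c G where Y: "\<forall>k. Y (k + N) = Y k" "\<forall>k\<in>{0..<N}. y k = Y k"
     "\<forall>k. Y k = c * xi_half N (G k)" "quadlike p st G" unfolding Inv_def by blast
  have "\<forall>k. xi_half N (2 * l * (k + N)) * Y (k + N) = xi_half N (2 * l * k) * Y k"
  proof
    fix k
    have "xi_half N (2 * l * (k + N)) = xi_half N (2 * l * k)"
      using assms(3) by (intro xi_cong) (auto simp: algebra_simps)
    then show "xi_half N (2 * l * (k + N)) * Y (k + N) = xi_half N (2 * l * k) * Y k" using Y(1) by simp
  qed
  moreover have "\<forall>k\<in>{0..<N}. z k = xi_half N (2 * l * k) * Y k" using Y lfm by simp
  moreover have "\<forall>k. xi_half N (2 * l * k) * Y k = c * xi_half N (G k + (2 * l) * k)"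
    using Y(3) by (simp add: xi_mult[symmetric] algebra_simps)
  ultimately show ?case unfolding Inv_def using ql_lin[OF Y(4), of "2 * l"]
    by (intro exI[of _ "\<lambda>k. xi_half N (2 * l * k) * Y k"] exI[of _ c] exI[of _ "\<lambda>k. G k + (2 * l) * k"]) blast
next
  case (conj x y z)
  then obtain Y c G where Y: "\<forall>k. Y (k + N) = Y k" "\<forall>k\<in>{0..<N}. y k = Y k"
     "\<forall>k. Y k = c * xi_half N (G k)" "quadlike p st G" unfolding Inv_def by blast
  have "\<forall>k. cnj (Y (k + N)) = cnj (Y k)" using Y by simp
  moreover have "\<forall>k\<in>{0..<N}. z k = cnj (Y k)" using Y conj by simp
  moreover have "\<forall>k. cnj (Y k) = cnj c * xi_half N (- G k)" using Y(3) by (simp add: xi_cnj)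
  ultimately show ?case unfolding Inv_def using ql_neg[OF Y(4)]
    by (intro exI[of _ "\<lambda>k. cnj (Y k)"] exI[of _ "cnj c"] exI[of _ "\<lambda>k. - G k"]) blast
qed

lemma pow_shift_dvd: fixes m x t :: int shows "m dvd ((x + m*t)^n - x^n)"
proof (induction n)
  case 0 then show ?case by simp
next
  case (Suc n)
  have "(x + m*t)^(Suc n) - x^(Suc n) = (x + m*t) * ((x + m*t)^n - x^n) + m * (t * x^n)"
    by (simp add: algebra_simps)
  then show ?case using Suc by simp
qed

lemma pow_shift_obtain: fixes m x t :: int obtains w where "(x + m*t)^n = x^n + m * w"
proof -
  obtain w where "(x + m*t)^n - x^n = m * w" using pow_shift_dvd[of m x t n] by (auto elim!: dvdE)
  then show ?thesis using that[of w] by (simp add: algebra_simps)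
qed

lemma xi_const:
  assumes "N > 0" "\<forall>k. xi_half N (E k) = c * xi_half N (G k)"
  shows "(2 * N) dvd (E k - G k - (E 0 - G 0))"
proof -
  have c: "c = xi_half N (E 0 - G 0)"
  proof -
    have "xi_half N (E 0) * xi_half N (- G 0) = c * (xi_half N (G 0) * xi_half N (- G 0))"
      using assms(2) by simp
    also have "xi_half N (G 0) * xi_half N (- G 0) = 1" by (subst xi_mult) (simp add: xi_half_def)
    finally show ?thesis by (simp add: xi_mult)
  qed
  have "xi_half N (E k) = xi_half N (E 0 - G 0 + G k)" using assms(2) c by (simp add: xi_mult)
  then have "(2 * N) dvd (E k - (E 0 - G 0 + G k))" using xi_inj assms(1) by blast
  then show ?thesis by (simp add: algebra_simps)
qed

lemma quadlike_intro:
  fixes p :: int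
  assumes "\<forall>k. p^2 dvd (G k - (A*k^2 + B*k + C + p * h k))"
    and "\<forall>k j. p dvd (h (k + p*j) - h k)" and "st \<longrightarrow> \<not> p dvd A"
  shows "quadlike p st G"
proof -
  define R where "R = (\<lambda>k. G k - A*k^2 - B*k)"
  have G: "\<forall>k. G k = A*k^2 + B*k + R k" unfolding R_def by simp
  have R1: "\<forall>k j. p^2 dvd (R (k + p*j) - R k)"
  proof (intro allI)
    fix k j
    obtain t where t: "h (k + p*j) - h k = p * t" using assms(2) by (meson dvdE)
    have "R (k + p*j) - R k = (G (k + p*j) - (A*(k + p*j)^2 + B*(k + p*j) + C + p * h (k + p*j)))
       - (G k - (A*k^2 + B*k + C + p * h k)) + p^2 * t"
      unfolding R_def using t by (simp add: power2_eq_square algebra_simps)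
    then show "p^2 dvd (R (k + p*j) - R k)" using assms(1) by (metis dvd_add dvd_diff dvd_triv_left)
  qed
  have pp: "p dvd p^2" by (simp add: power2_eq_square)
  have R2: "\<forall>k. p dvd (R k - R 0)"
  proof
    fix k
    have "R k - R 0 = (G k - (A*k^2 + B*k + C + p * h k)) - (G 0 - (A*0^2 + B*0 + C + p * h 0)) + p * (h k - h 0)"
      unfolding R_def by (simp add: power2_eq_square algebra_simps)
    moreover have "p dvd (G k - (A*k^2 + B*k + C + p * h k))"
      using assms(1) pp dvd_trans by blast
    moreover have "p dvd (G 0 - (A*0^2 + B*0 + C + p * h 0))"
      using assms(1) pp dvd_trans by blast
    ultimately show "p dvd (R k - R 0)" by (metis dvd_add dvd_diff dvd_triv_left)
  qed
  show ?thesis unfolding quadlike_def using G R1 R2 assms(3) by blast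
qed

lemma not_dvd_of_coprime:
  fixes u N p :: int
  assumes "coprime u N" "p dvd N" "prime p" shows "\<not> p dvd u"
proof
  assume "p dvd u"
  then have "is_unit p" using assms coprime_common_divisor by blast
  then show False using assms(3) not_prime_unit by blast
qed

lemma target1:
  fixes p :: nat and a b N :: int and s :: "int \<Rightarrow> complex"
  assumes pr: "prime p" and p2: "p > 2" and N0: "N > 0" and pN: "(int p)^2 dvd N"
    and zc: "is_ZC N s" and al: "\<not> int p dvd (1 + a)"
    and inv: "Inv N (int p) st (comp_perm N s (\<lambda>x. x^p + a*x + b))"
  shows False
proof -
  define \<pi> where "\<pi> = (\<lambda>x::int. x^p + a*x + b)"
  obtain u l where u: "coprime u N" and s: "\<forall>k\<in>{0..<N}. s k = zc_seq N u l k"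
    using zc unfolding is_ZC_def by blast
  obtain Y c G where Y: "\<forall>k. Y (k + N) = Y k" "\<forall>k\<in>{0..<N}. comp_perm N s \<pi> k = Y k"
     "\<forall>k. Y k = c * xi_half N (G k)" "quadlike (int p) st G"
    using inv unfolding Inv_def \<pi>_def by blast
  obtain A B R where G: "\<forall>k. G k = A*k^2 + B*k + R k"
    and R1: "\<forall>k j. (int p)^2 dvd (R (k + int p*j) - R k)" and R2: "\<forall>k. int p dvd (R k - R 0)"
    using Y(4) unfolding quadlike_def by blast
  define Z where "Z = (\<lambda>k. zc_seq N u l (\<pi> k))"
  have Zper: "\<forall>k. Z (k + N) = Z k"
  proof
    fix k
    obtain w where w: "(k + N*1)^p = k^p + N * w" by (rule pow_shift_obtain)
    have "\<pi> (k + N) = \<pi> k + N * (w + a)" unfolding \<pi>_def using w by (simp add: algebra_simps)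
    then show "Z (k + N) = Z k" unfolding Z_def using zc_shift[OF N0] by simp
  qed
  have agree: "\<forall>k\<in>{0..<N}. Y k = Z k"
  proof
    fix k assume "k \<in> {0..<N}"
    then have "Y k = s (\<pi> k mod N)" using Y(2) unfolding comp_perm_def by simp
    also have "\<dots> = zc_seq N u l (\<pi> k mod N)" using s N0 by simp
    also have "\<dots> = Z k" unfolding Z_def using zc_mod[OF N0] by simp
    finally show "Y k = Z k" .
  qed
  define E where "E = (\<lambda>k. u * ((\<pi> k)^2 + (N mod 2) * \<pi> k + 2 * l * \<pi> k))"
  have "\<forall>k. xi_half N (E k) = c * xi_half N (G k)"
  proof
    fix k
    have "Z k = Y k" using per_agree[OF Y(1) Zper N0 agree] by simp
    then show "xi_half N (E k) = c * xi_half N (G k)" using Y(3) unfolding Z_def E_def zc_seq_def by simp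
  qed
  then have D: "\<And>k. (2 * N) dvd (E k - G k - (E 0 - G 0))" using xi_const[OF N0] by blast
  have "(int p)^2 dvd (2 * N)" using pN by simp
  then have D2: "\<And>k. (int p)^2 dvd (E k - G k - (E 0 - G 0))" using D dvd_trans by blast
  have pN1: "int p dvd N" using pN by (metis dvd_mult_left power2_eq_square)
  have nu: "\<not> int p dvd u" using not_dvd_of_coprime[OF u pN1] pr by simp
  show False
  proof (rule core[OF pr p2 nu al, where V = "u * (N mod 2 + 2 * l)" and A = A and B = B and R = "\<lambda>k. R k + (E 0 - G 0)"])
    show "\<forall>k. (int p)^2 dvd (u * (k^p + a*k + b)^2 + u * (N mod 2 + 2 * l) * (k^p + a*k + b)
             - (A*k^2 + B*k + (R k + (E 0 - G 0))))"
    proof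
      fix k
      have "u * (k^p + a*k + b)^2 + u * (N mod 2 + 2 * l) * (k^p + a*k + b)
             - (A*k^2 + B*k + (R k + (E 0 - G 0))) = E k - G k - (E 0 - G 0)"
        unfolding E_def \<pi>_def using G by (simp add: algebra_simps)
      then show "(int p)^2 dvd (u * (k^p + a*k + b)^2 + u * (N mod 2 + 2 * l) * (k^p + a*k + b)
             - (A*k^2 + B*k + (R k + (E 0 - G 0))))" using D2[of k] by metis
    qed
    show "\<forall>k. (int p)^2 dvd (R (k + int p) + (E 0 - G 0) - (R k + (E 0 - G 0)))"
      using R1[rule_format, of _ 1] by simp
    show "\<forall>k. int p dvd (R k + (E 0 - G 0) - (R 0 + (E 0 - G 0)))" using R2 by simp
  qed
qed

lemma target2:
  fixes p :: nat and a b N :: int and s :: "int \<Rightarrow> complex"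
  assumes pr: "prime p" and p2: "p > 2" and N0: "N > 0" and pN: "(int p)^2 dvd N"
    and zc: "is_ZC N s" and al: "\<not> int p dvd (1 + a)"
    and pp: "perm_poly N (\<lambda>x. x^p + a*x + b)"
    and inv: "Inv N (int p) True (comp_inv_perm N s (\<lambda>x. x^p + a*x + b))"
  shows False
proof -
  define \<pi> where "\<pi> = (\<lambda>x::int. x^p + a*x + b)"
  obtain u l where u: "coprime u N" and s: "\<forall>k\<in>{0..<N}. s k = zc_seq N u l k"
    using zc unfolding is_ZC_def by blast
  obtain Y c G where Y: "\<forall>k. Y (k + N) = Y k" "\<forall>k\<in>{0..<N}. comp_inv_perm N s \<pi> k = Y k"
     "\<forall>k. Y k = c * xi_half N (G k)" "quadlike (int p) True G"
    using inv unfolding Inv_def \<pi>_def by blast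
  obtain A B R where nA: "\<not> int p dvd A" and G: "\<forall>k. G k = A*k^2 + B*k + R k"
    and R1: "\<forall>k j. (int p)^2 dvd (R (k + int p*j) - R k)" and R2: "\<forall>k. int p dvd (R k - R 0)"
    using Y(4) unfolding quadlike_def by blast
  have bij: "bij_betw (\<lambda>k. \<pi> k mod N) {0..<N} {0..<N}" using pp unfolding perm_poly_def \<pi>_def .
  have inj: "inj_on (\<lambda>k. \<pi> k mod N) {0..<N}" using bij bij_betw_def by blast
  define Z where "Z = (\<lambda>k. Y (\<pi> k))"
  have Zper: "\<forall>k. Z (k + N) = Z k"
  proof
    fix k
    obtain w where w: "(k + N*1)^p = k^p + N * w" by (rule pow_shift_obtain)
    have "\<pi> (k + N) = \<pi> k + N * (w + a)" unfolding \<pi>_def using w by (simp add: algebra_simps)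
    then show "Z (k + N) = Z k" unfolding Z_def using per_mult[OF Y(1)] by simp
  qed
  have agree: "\<forall>k\<in>{0..<N}. zc_seq N u l k = Z k"
  proof
    fix k assume k: "k \<in> {0..<N}"
    have m: "\<pi> k mod N \<in> {0..<N}" using N0 by simp
    have "Z k = Y (\<pi> k mod N)" unfolding Z_def using per_mod[OF Y(1)] by simp
    also have "\<dots> = comp_inv_perm N s \<pi> (\<pi> k mod N)" using Y(2) m by simp
    also have "\<dots> = s k" unfolding comp_inv_perm_def using the_inv_into_f_f[OF inj k] by simp
    also have "\<dots> = zc_seq N u l k" using s k by simp
    finally show "zc_seq N u l k = Z k" by simp
  qed
  define E where "E = (\<lambda>k. u * (k^2 + (N mod 2) * k + 2 * l * k))"
  define G' where "G' = (\<lambda>k. G (\<pi> k))"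
  have "\<forall>k. xi_half N (E k) = c * xi_half N (G' k)"
  proof
    fix k
    have "zc_seq N u l k = Z k" using per_agree[OF zc_per[OF N0] Zper N0 agree] by simp
    then show "xi_half N (E k) = c * xi_half N (G' k)" using Y(3) unfolding Z_def E_def G'_def zc_seq_def by simp
  qed
  then have D: "\<And>k. (2 * N) dvd (E k - G' k - (E 0 - G' 0))" using xi_const[OF N0] by blast
  have "(int p)^2 dvd (2 * N)" using pN by simp
  then have D2: "\<And>k. (int p)^2 dvd (E k - G' k - (E 0 - G' 0))" using D dvd_trans by blast
  define K where "K = E 0 - G' 0"
  show False
  proof (rule core[OF pr p2 nA al, where V = B and A = u and B = "u * (N mod 2 + 2 * l)" and R = "\<lambda>k. - R (\<pi> k) - K"])
    show "\<forall>k. (int p)^2 dvd (A * (k^p + a*k + b)^2 + B * (k^p + a*k + b)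
             - (u*k^2 + u * (N mod 2 + 2 * l)*k + (- R (\<pi> k) - K)))"
    proof
      fix k
      have "A * (k^p + a*k + b)^2 + B * (k^p + a*k + b)
             - (u*k^2 + u * (N mod 2 + 2 * l)*k + (- R (\<pi> k) - K)) = - (E k - G' k - (E 0 - G' 0))"
        unfolding E_def G'_def K_def using G by (simp add: \<pi>_def algebra_simps power2_eq_square)
      then show "(int p)^2 dvd (A * (k^p + a*k + b)^2 + B * (k^p + a*k + b)
             - (u*k^2 + u * (N mod 2 + 2 * l)*k + (- R (\<pi> k) - K)))"
        using D2[of k] by (metis dvd_minus_iff)
    qed
    show "\<forall>k. (int p)^2 dvd (- R (\<pi> (k + int p)) - K - (- R (\<pi> k) - K))"
    proof
      fix k
      obtain w where w: "(k + int p*1)^p = k^p + int p * w" by (rule pow_shift_obtain)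
      have "\<pi> (k + int p) = \<pi> k + int p * (w + a)" unfolding \<pi>_def using w by (simp add: algebra_simps)
      moreover have "(int p)^2 dvd (R (\<pi> k + int p * (w + a)) - R (\<pi> k))" using R1 by blast
      ultimately have "(int p)^2 dvd - (- R (\<pi> (k + int p)) - K - (- R (\<pi> k) - K))" by simp
      then show "(int p)^2 dvd (- R (\<pi> (k + int p)) - K - (- R (\<pi> k) - K))" by (simp only: dvd_minus_iff)
    qed
    show "\<forall>k. int p dvd (- R (\<pi> k) - K - (- R (\<pi> 0) - K))"
    proof
      fix k
      have "int p dvd ((R (\<pi> 0) - R 0) - (R (\<pi> k) - R 0))" using R2 by (blast intro: dvd_diff)
      then show "int p dvd (- R (\<pi> k) - K - (- R (\<pi> 0) - K))" by simp
    qed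
  qed
qed

lemma pp_inj_mod:
  fixes N p :: int and f :: "int \<Rightarrow> int"
  assumes pp: "perm_poly N f" and pN: "p dvd N" and p0: "p > 0" and N0: "N > 0"
    and fpoly: "\<forall>x y. p dvd (x - y) \<longrightarrow> p dvd (f x - f y)"
    and fxy: "p dvd (f x - f y)"
  shows "p dvd (x - y)"
proof (rule ccontr)
  assume nxy: "\<not> p dvd (x - y)"
  define g where "g = (\<lambda>r. f r mod p)"
  have gmod: "\<And>z. g (z mod p) = f z mod p"
  proof -
    fix z
    have "p dvd (z mod p - z)" by (simp only: mod_eq_dvd_iff[symmetric] mod_mod_trivial)
    then have "p dvd (f (z mod p) - f z)" using fpoly by blast
    then show "g (z mod p) = f z mod p" unfolding g_def by (simp add: mod_eq_dvd_iff)
  qed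
  have "x mod p \<noteq> y mod p" using nxy by (simp add: mod_eq_dvd_iff)
  moreover have "g (x mod p) = g (y mod p)" using gmod fxy by (simp add: mod_eq_dvd_iff)
  moreover have "x mod p \<in> {0..<p}" "y mod p \<in> {0..<p}" using p0 by auto
  ultimately have ninj: "\<not> inj_on g {0..<p}" unfolding inj_on_def by blast
  have sub: "g ` {0..<p} \<subseteq> {0..<p}" unfolding g_def using p0 by auto
  have "g ` {0..<p} \<noteq> {0..<p}"
  proof
    assume "g ` {0..<p} = {0..<p}"
    then have "inj_on g {0..<p}" by (intro eq_card_imp_inj_on) auto
    then show False using ninj by simp
  qed
  then obtain r where r: "r \<in> {0..<p}" "r \<notin> g ` {0..<p}" using sub by blast
  have "p \<le> N" using pN N0 by (simp add: zdvd_imp_le)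
  then have "r \<in> {0..<N}" using r by auto
  then obtain k where k: "k \<in> {0..<N}" "f k mod N = r"
  proof -
    have "r \<in> (\<lambda>k. f k mod N) ` {0..<N}" using pp \<open>r \<in> {0..<N}\<close> unfolding perm_poly_def bij_betw_def by simp
    then show ?thesis using that by blast
  qed
  have "f k mod p = r"
  proof -
    have "(f k mod N) mod p = f k mod p" using pN by (simp add: mod_mod_cancel)
    then show ?thesis using k r by simp
  qed
  then have "g (k mod p) = r" using gmod by simp
  moreover have "k mod p \<in> {0..<p}" using p0 by simp
  ultimately show False using r by blast
qed

lemma quad_pp:
  fixes N p f2 f1 f0 :: int
  assumes pr: "prime p" and p2: "p > 2" and pN: "p dvd N" and N0: "N > 0"
    and pp: "perm_poly N (\<lambda>x. f2*x^2 + f1*x + f0)"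
  shows "p dvd f2 \<and> \<not> p dvd f1"
proof -
  define f where "f = (\<lambda>x::int. f2*x^2 + f1*x + f0)"
  have fd: "\<And>x y. f x - f y = (x - y) * (f2 * (x + y) + f1)"
    unfolding f_def by (simp add: power2_eq_square algebra_simps)
  have fpoly: "\<forall>x y. p dvd (x - y) \<longrightarrow> p dvd (f x - f y)" using fd by simp
  have I: "\<And>x y. p dvd (f x - f y) \<Longrightarrow> p dvd (x - y)"
  proof -
    fix x y assume "p dvd (f x - f y)"
    moreover have ppf: "perm_poly N f" using pp unfolding f_def .
    moreover have "p > 0" using p2 by simp
    ultimately show "p dvd (x - y)" using pp_inj_mod[OF ppf pN _ N0 fpoly] by blast
  qed
  have n2: "\<not> p dvd 2" using p2 by (auto dest: zdvd_imp_le)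
  have n1: "\<not> p dvd 1" using p2 by (auto dest: zdvd_imp_le)
  have "p dvd f2"
  proof (rule ccontr)
    assume nf2: "\<not> p dvd f2"
    then have "coprime f2 p" using pr prime_imp_coprime coprime_commute by blast
    then obtain i v where iv: "i * f2 + v * p = 1" using bezout_int[of f2 p] by auto
    show False
    proof (cases "p dvd f1")
      case True
      have "f 1 - f (-1) = 2 * f1" unfolding f_def by simp
      then have "p dvd (f 1 - f (-1))" using True by simp
      then have "p dvd 2" using I[of 1 "-1"] by simp
      then show False using n2 by simp
    next
      case False
      define x where "x = - f1 * i"
      have "f x - f 0 = x * (f2 * x + f1)" using fd[of x 0] by simp
      also have "\<dots> = x * f1 * (1 - i * f2)" unfolding x_def by (simp add: algebra_simps)
      also have "\<dots> = x * f1 * (v * p)"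
      proof -
        have "1 - i * f2 = v * p" using iv by simp
        then show ?thesis by simp
      qed
      finally have "p dvd (f x - f 0)" by simp
      then have "p dvd x" using I[of x 0] by simp
      then have "p dvd f1 \<or> p dvd i" unfolding x_def using pr by (simp add: prime_dvd_mult_iff)
      then show False
      proof
        assume "p dvd f1" then show False using False by simp
      next
        assume "p dvd i"
        then have "p dvd (i * f2 + v * p)" by simp
        then show False using iv n1 by simp
      qed
    qed
  qed
  moreover have "\<not> p dvd f1"
  proof
    assume "p dvd f1"
    have "f 1 - f 0 = f2 + f1" unfolding f_def by simp
    then have "p dvd (f 1 - f 0)" using \<open>p dvd f1\<close> \<open>p dvd f2\<close> by simp
    then have "p dvd 1" using I[of 1 0] by simp
    then show False using n1 by simp
  qed
  ultimately show ?thesis by blast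
qed

lemma start1:
  fixes N p :: int and t :: "int \<Rightarrow> complex"
  assumes "is_ZC N t" "N > 0" "p dvd N" "prime p"
  shows "Inv N p True t"
proof -
  obtain u l where u: "coprime u N" and s: "\<forall>k\<in>{0..<N}. t k = zc_seq N u l k"
    using assms(1) unfolding is_ZC_def by blast
  define G where "G = (\<lambda>k. u * (k^2 + (N mod 2) * k + 2 * l * k))"
  have "quadlike p True G"
    by (rule quadlike_intro[where A = u and B = "u * (N mod 2 + 2 * l)" and C = 0 and h = "\<lambda>_. 0"])
       (auto simp: G_def algebra_simps not_dvd_of_coprime[OF u assms(3,4)])
  moreover have "\<forall>k. zc_seq N u l k = 1 * xi_half N (G k)" unfolding G_def zc_seq_def by simp
  ultimately show ?thesis unfolding Inv_def using zc_per[OF assms(2)] s by blast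
qed

lemma start2:
  fixes N p f2 f1 f0 :: int and s' :: "int \<Rightarrow> complex"
  assumes zc: "is_ZC N s'" and N0: "N > 0" and pf2: "p dvd f2"
  shows "Inv N p False (comp_perm N s' (\<lambda>x. f2*x^2 + f1*x + f0))"
proof -
  define \<pi> where "\<pi> = (\<lambda>x::int. f2*x^2 + f1*x + f0)"
  obtain u l where u: "coprime u N" and s: "\<forall>k\<in>{0..<N}. s' k = zc_seq N u l k"
    using zc unfolding is_ZC_def by blast
  obtain g where g: "f2 = p * g" using pf2 by (auto elim!: dvdE)
  define Y where "Y = (\<lambda>k. zc_seq N u l (\<pi> k))"
  have Yper: "\<forall>k. Y (k + N) = Y k"
  proof
    fix k
    have "\<pi> (k + N) = \<pi> k + N * (f2 * (2 * k + N) + f1)" unfolding \<pi>_def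
      by (simp add: power2_eq_square algebra_simps)
    then show "Y (k + N) = Y k" unfolding Y_def using zc_shift[OF N0] by simp
  qed
  have agree: "\<forall>k\<in>{0..<N}. comp_perm N s' \<pi> k = Y k"
  proof
    fix k assume "k \<in> {0..<N}"
    have "comp_perm N s' \<pi> k = s' (\<pi> k mod N)" unfolding comp_perm_def by simp
    also have "\<dots> = zc_seq N u l (\<pi> k mod N)" using s N0 by simp
    also have "\<dots> = Y k" unfolding Y_def using zc_mod[OF N0] by simp
    finally show "comp_perm N s' \<pi> k = Y k" .
  qed
  define w where "w = N mod 2 + 2 * l"
  define G where "G = (\<lambda>k. u * ((\<pi> k)^2 + w * \<pi> k))"
  have YG: "\<forall>k. Y k = 1 * xi_half N (G k)"
    unfolding Y_def G_def zc_seq_def w_def by (simp add: algebra_simps)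
  define h where "h = (\<lambda>k. u * g * (p * g * k^4 + 2 * f1 * k^3 + 2 * f0 * k^2))"
  have "quadlike p False G"
  proof (rule quadlike_intro[where A = "u * (f1^2 + w * f2)" and B = "u * (2 * f1 * f0 + w * f1)"
        and C = "u * (f0^2 + w * f0)" and h = h])
    show "\<forall>k. p^2 dvd (G k - (u * (f1^2 + w * f2) * k^2 + u * (2 * f1 * f0 + w * f1) * k + u * (f0^2 + w * f0) + p * h k))"
    proof
      fix k
      have "G k - (u * (f1^2 + w * f2) * k^2 + u * (2 * f1 * f0 + w * f1) * k + u * (f0^2 + w * f0) + p * h k) = 0"
        unfolding G_def h_def \<pi>_def g by (simp add: power2_eq_square power4_eq_xxxx power3_eq_cube algebra_simps)
      then show "p^2 dvd (G k - (u * (f1^2 + w * f2) * k^2 + u * (2 * f1 * f0 + w * f1) * k + u * (f0^2 + w * f0) + p * h k))"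
        by simp
    qed
    show "\<forall>k j. p dvd (h (k + p * j) - h k)"
    proof (intro allI)
      fix k j
      obtain w2 where w2: "(k + p*j)^2 = k^2 + p * w2" by (rule pow_shift_obtain)
      obtain w3 where w3: "(k + p*j)^3 = k^3 + p * w3" by (rule pow_shift_obtain)
      obtain w4 where w4: "(k + p*j)^4 = k^4 + p * w4" by (rule pow_shift_obtain)
      have "h (k + p * j) - h k = p * (u * g * (p * g * w4 + 2 * f1 * w3 + 2 * f0 * w2))"
        unfolding h_def using w2 w3 w4 by (simp add: algebra_simps)
      then show "p dvd (h (k + p * j) - h k)" by simp
    qed
    show "False \<longrightarrow> \<not> p dvd (u * (f1^2 + w * f2))" by simp
  qed
  then show ?thesis unfolding Inv_def using Yper agree YG \<pi>_def by blast
qed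

lemma inv_quad_arith:
  fixes p f0 f1 g fi z k y d :: int
  assumes e1: "f1 * fi = 1 + p^2 * z" and e2: "p*g*y^2 + f1*y + f0 - k = p^2 * d"
  shows "\<exists>e. y = fi*(k - f0) - p*fi*g*(fi*(k - f0))^2 + p^2 * e"
proof -
  define t where "t = - fi*g*y^2 + p*fi*d - p*z*y"
  have y1: "y = fi*(k - f0) - p*fi*g*y^2 + p^2*(fi*d - z*y)"
  proof -
    have "y * (f1 * fi) = y + p^2 * z * y" using e1 by (simp add: algebra_simps)
    moreover have "f1 * y = k - f0 - p*g*y^2 + p^2 * d" using e2 by (simp add: algebra_simps)
    ultimately have "y + p^2 * z * y = fi * (k - f0 - p*g*y^2 + p^2 * d)"
      by (metis mult.assoc mult.commute)
    then show ?thesis by (simp add: algebra_simps)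
  qed
  define l where "l = fi*(k - f0)"
  have yt: "y = l + p * t" using y1 unfolding t_def l_def by (simp add: power2_eq_square algebra_simps)
  have "y = l - p*fi*g*l^2 + p^2 * (fi*d - z*y - fi*g*(2*l*t + p*t^2))"
  proof -
    have ysq: "y^2 = l^2 + p*(2*l*t + p*t^2)" using yt by (simp add: power2_eq_square algebra_simps)
    have "y = l - p*fi*g*(l^2 + p*(2*l*t + p*t^2)) + p^2*(fi*d - z*y)"
      using y1 unfolding ysq l_def .
    then show ?thesis by (simp add: power2_eq_square algebra_simps)
  qed
  then show ?thesis unfolding l_def by blast
qed

lemma start3:
  fixes N p f2 f1 f0 :: int and s' :: "int \<Rightarrow> complex"
  assumes zc: "is_ZC N s'" and N0: "N > 0" and pr: "prime p" and pN2: "p^2 dvd N"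
    and pf2: "p dvd f2" and nf1: "\<not> p dvd f1"
    and pp: "perm_poly N (\<lambda>x. f2*x^2 + f1*x + f0)"
  shows "Inv N p False (comp_inv_perm N s' (\<lambda>x. f2*x^2 + f1*x + f0))"
proof -
  define \<pi> where "\<pi> = (\<lambda>x::int. f2*x^2 + f1*x + f0)"
  obtain u l where u: "coprime u N" and s: "\<forall>k\<in>{0..<N}. s' k = zc_seq N u l k"
    using zc unfolding is_ZC_def by blast
  obtain g where g: "f2 = p * g" using pf2 by (rule dvdE)
  have bij: "bij_betw (\<lambda>k. \<pi> k mod N) {0..<N} {0..<N}" using pp unfolding perm_poly_def \<pi>_def .
  define \<sigma> where "\<sigma> = the_inv_into {0..<N} (\<lambda>k. \<pi> k mod N)"
  have bijs: "bij_betw \<sigma> {0..<N} {0..<N}" unfolding \<sigma>_def by (rule bij_betw_the_inv_into[OF bij])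
  have sig_in: "\<sigma> m \<in> {0..<N}" if "m \<in> {0..<N}" for m using bij_betw_apply[OF bijs that] .
  have sig_inv: "\<pi> (\<sigma> m) mod N = m" if "m \<in> {0..<N}" for m
    unfolding \<sigma>_def using f_the_inv_into_f_bij_betw[OF bij, of m] that by simp
  define y where "y = (\<lambda>k. \<sigma> (k mod N))"
  define Y where "Y = (\<lambda>k. zc_seq N u l (y k))"
  have Yper: "\<forall>k. Y (k + N) = Y k" unfolding Y_def y_def by simp
  have agree: "\<forall>k\<in>{0..<N}. comp_inv_perm N s' \<pi> k = Y k"
  proof
    fix k assume k: "k \<in> {0..<N}"
    have "comp_inv_perm N s' \<pi> k = s' (\<sigma> k)" unfolding comp_inv_perm_def \<sigma>_def by simp
    also have "\<dots> = zc_seq N u l (\<sigma> k)" using s sig_in[OF k] by simp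
    also have "\<dots> = Y k" unfolding Y_def y_def using k by simp
    finally show "comp_inv_perm N s' \<pi> k = Y k" .
  qed
  define w where "w = N mod 2 + 2 * l"
  define G where "G = (\<lambda>k. u * ((y k)^2 + w * y k))"
  have YG: "\<forall>k. Y k = 1 * xi_half N (G k)"
    unfolding Y_def G_def zc_seq_def w_def by (simp add: algebra_simps)
  have "coprime f1 p" using pr nf1 prime_imp_coprime coprime_commute by blast
  then have "coprime f1 (p^2)" by simp
  then obtain i v where iv: "i * f1 + v * p^2 = 1" using bezout_int[of f1 "p^2"] by auto
  define fi where "fi = i"
  have e1: "f1 * fi = 1 + p^2 * (- v)" using iv unfolding fi_def by (simp add: algebra_simps)
  define ll where "ll = (\<lambda>k. fi * (k - f0))"
  define h where "h = (\<lambda>k. u * (- 2 * fi * g * (ll k)^3 - w * fi * g * (ll k)^2))"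
  have "quadlike p False G"
  proof (rule quadlike_intro[where A = "u * fi^2" and B = "u * (w * fi - 2 * fi^2 * f0)"
        and C = "u * (fi^2 * f0^2 - w * fi * f0)" and h = h])
    show "\<forall>k. p^2 dvd (G k - (u * fi^2 * k^2 + u * (w * fi - 2 * fi^2 * f0) * k + u * (fi^2 * f0^2 - w * fi * f0) + p * h k))"
    proof
      fix k
      have km: "k mod N \<in> {0..<N}" using N0 by simp
      have "\<pi> (y k) mod N = k mod N" unfolding y_def using sig_inv[OF km] by simp
      then have "N dvd (\<pi> (y k) - k)" by (simp add: mod_eq_dvd_iff)
      then have "p^2 dvd (\<pi> (y k) - k)" using pN2 dvd_trans by blast
      then obtain d where "\<pi> (y k) - k = p^2 * d" by (auto elim!: dvdE)
      then have e2: "p*g*(y k)^2 + f1*(y k) + f0 - k = p^2 * d" unfolding \<pi>_def g by (simp add: algebra_simps)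
      obtain e where ye: "y k = fi*(k - f0) - p*fi*g*(fi*(k - f0))^2 + p^2 * e"
        using inv_quad_arith[OF e1 e2] by blast
      define Yb where "Yb = ll k - p*fi*g*(ll k)^2"
      define q where "q = - fi*g*(ll k)^2"
      have ye': "y k = Yb + p^2 * e" using ye unfolding Yb_def ll_def by simp
      have "G k - (u * fi^2 * k^2 + u * (w * fi - 2 * fi^2 * f0) * k + u * (fi^2 * f0^2 - w * fi * f0) + p * h k)
          = p^2 * (u * e * (2 * Yb + p^2 * e + w) + u * q^2)"
        unfolding G_def ye' h_def Yb_def q_def ll_def by (simp add: power2_eq_square power3_eq_cube algebra_simps)
      then show "p^2 dvd (G k - (u * fi^2 * k^2 + u * (w * fi - 2 * fi^2 * f0) * k + u * (fi^2 * f0^2 - w * fi * f0) + p * h k))"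
        by simp
    qed
    show "\<forall>k j. p dvd (h (k + p * j) - h k)"
    proof (intro allI)
      fix k j
      have lls: "ll (k + p * j) = ll k + p * (fi * j)" unfolding ll_def by (simp add: algebra_simps)
      obtain w2 where w2: "(ll k + p*(fi*j))^2 = (ll k)^2 + p * w2" by (rule pow_shift_obtain)
      obtain w3 where w3: "(ll k + p*(fi*j))^3 = (ll k)^3 + p * w3" by (rule pow_shift_obtain)
      have "h (k + p * j) - h k = p * (u * (- 2 * fi * g * w3 - w * fi * g * w2))"
        unfolding h_def lls w2 w3 by (simp add: algebra_simps)
      then show "p dvd (h (k + p * j) - h k)" by simp
    qed
    show "False \<longrightarrow> \<not> p dvd (u * fi^2)" by simp
  qed
  then show ?thesis unfolding Inv_def using Yper agree YG \<pi>_def by blast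
qed

theorem proposition4:
  fixes p n :: nat and Q :: "int set" and a b N u l :: int and s :: "int \<Rightarrow> complex"
  assumes "prime p" and "p \<ge> 3" and "n \<ge> 2"
    and "finite Q" and "\<forall>q\<in>Q. prime q \<and> q \<noteq> int p \<and> coprime (int p) (q - 1)"
    and "N = int p ^ n * (\<Prod>q\<in>Q. q)"
    and "is_ZC N s"
    and "perm_poly N (\<lambda>x. x ^ p + a * x + b)"
    and "a mod int p \<noteq> 0" and "a mod int p \<noteq> int p - 1"
  shows "(\<not> (\<exists>t. is_ZC N t \<and> equiv_seq N t (comp_perm N s (\<lambda>x. x ^ p + a * x + b))))
       \<and> (\<not> (\<exists>t. is_ZC N t \<and> equiv_seq N t (comp_inv_perm N s (\<lambda>x. x ^ p + a * x + b))))
       \<and> (\<not> (\<exists>s' f2 f1 f0. is_ZC N s' \<and> quad_perm_poly N f2 f1 f0 \<and>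
              (equiv_seq N (comp_perm N s' (\<lambda>x. f2 * x^2 + f1 * x + f0))
                           (comp_perm N s (\<lambda>x. x ^ p + a * x + b))
             \<or> equiv_seq N (comp_inv_perm N s' (\<lambda>x. f2 * x^2 + f1 * x + f0))
                           (comp_perm N s (\<lambda>x. x ^ p + a * x + b)))))"
proof -
  note pr = assms(1)
  have p2: "p > 2" using assms(2) by simp
  have ipr: "prime (int p)" using pr by simp
  have ip2: "int p > 2" using p2 by simp
  have Qpos: "(\<Prod>q\<in>Q. q) > 0" using assms(5) by (intro prod_pos) (auto dest: prime_gt_0_int)
  have N0: "N > 0" using assms(6) Qpos p2 by simp
  have "(int p)^2 dvd int p ^ n" using assms(3) by (simp add: le_imp_power_dvd)
  then have pN2: "(int p)^2 dvd N" using assms(6) by simp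
  then have pN: "int p dvd N" by (metis dvd_mult_left power2_eq_square)
  have al: "\<not> int p dvd (1 + a)"
  proof
    assume "int p dvd (1 + a)"
    then have "int p dvd (a - (-1))" by (simp add: add.commute)
    then have "a mod int p = (-1) mod int p" by (simp only: mod_eq_dvd_iff)
    also have "\<dots> = int p - 1" using ip2 by (simp add: zmod_minus1)
    finally show False using assms(10) by simp
  qed
  have P1: "\<not> (\<exists>t. is_ZC N t \<and> equiv_seq N t (comp_perm N s (\<lambda>x. x ^ p + a * x + b)))"
  proof
    assume "\<exists>t. is_ZC N t \<and> equiv_seq N t (comp_perm N s (\<lambda>x. x ^ p + a * x + b))"
    then obtain t where t: "is_ZC N t" "equiv_seq N t (comp_perm N s (\<lambda>x. x ^ p + a * x + b))" by blast
    have "Inv N (int p) True t" using start1[OF t(1) N0 pN ipr] .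
    then have "Inv N (int p) True (comp_perm N s (\<lambda>x. x ^ p + a * x + b))"
      using Inv_equiv[OF t(2) _ N0 pN ipr] by blast
    then show False using target1[OF pr p2 N0 pN2 assms(7) al] by blast
  qed
  have P2: "\<not> (\<exists>t. is_ZC N t \<and> equiv_seq N t (comp_inv_perm N s (\<lambda>x. x ^ p + a * x + b)))"
  proof
    assume "\<exists>t. is_ZC N t \<and> equiv_seq N t (comp_inv_perm N s (\<lambda>x. x ^ p + a * x + b))"
    then obtain t where t: "is_ZC N t" "equiv_seq N t (comp_inv_perm N s (\<lambda>x. x ^ p + a * x + b))" by blast
    have "Inv N (int p) True t" using start1[OF t(1) N0 pN ipr] .
    then have "Inv N (int p) True (comp_inv_perm N s (\<lambda>x. x ^ p + a * x + b))"
      using Inv_equiv[OF t(2) _ N0 pN ipr] by blast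
    then show False using target2[OF pr p2 N0 pN2 assms(7) al assms(8)] by blast
  qed
  have P3: "\<not> (\<exists>s' f2 f1 f0. is_ZC N s' \<and> quad_perm_poly N f2 f1 f0 \<and>
              (equiv_seq N (comp_perm N s' (\<lambda>x. f2 * x^2 + f1 * x + f0))
                           (comp_perm N s (\<lambda>x. x ^ p + a * x + b))
             \<or> equiv_seq N (comp_inv_perm N s' (\<lambda>x. f2 * x^2 + f1 * x + f0))
                           (comp_perm N s (\<lambda>x. x ^ p + a * x + b))))"
  proof
    assume "\<exists>s' f2 f1 f0. is_ZC N s' \<and> quad_perm_poly N f2 f1 f0 \<and>
              (equiv_seq N (comp_perm N s' (\<lambda>x. f2 * x^2 + f1 * x + f0))
                           (comp_perm N s (\<lambda>x. x ^ p + a * x + b))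
             \<or> equiv_seq N (comp_inv_perm N s' (\<lambda>x. f2 * x^2 + f1 * x + f0))
                           (comp_perm N s (\<lambda>x. x ^ p + a * x + b)))"
    then obtain s' f2 f1 f0 where z: "is_ZC N s'" and q: "quad_perm_poly N f2 f1 f0"
      and e: "equiv_seq N (comp_perm N s' (\<lambda>x. f2 * x^2 + f1 * x + f0))
                           (comp_perm N s (\<lambda>x. x ^ p + a * x + b))
             \<or> equiv_seq N (comp_inv_perm N s' (\<lambda>x. f2 * x^2 + f1 * x + f0))
                           (comp_perm N s (\<lambda>x. x ^ p + a * x + b))" by blast
    have ppq: "perm_poly N (\<lambda>x. f2 * x^2 + f1 * x + f0)" using q unfolding quad_perm_poly_def by blast
    have ff: "int p dvd f2 \<and> \<not> int p dvd f1" using quad_pp[OF ipr ip2 pN N0 ppq] .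
    have "Inv N (int p) False (comp_perm N s (\<lambda>x. x ^ p + a * x + b))"
      using e
    proof
      assume e1: "equiv_seq N (comp_perm N s' (\<lambda>x. f2 * x^2 + f1 * x + f0)) (comp_perm N s (\<lambda>x. x ^ p + a * x + b))"
      have "Inv N (int p) False (comp_perm N s' (\<lambda>x. f2 * x^2 + f1 * x + f0))"
        using start2[OF z N0] ff by blast
      then show ?thesis using Inv_equiv[OF e1 _ N0 pN ipr] by blast
    next
      assume e2: "equiv_seq N (comp_inv_perm N s' (\<lambda>x. f2 * x^2 + f1 * x + f0)) (comp_perm N s (\<lambda>x. x ^ p + a * x + b))"
      have "Inv N (int p) False (comp_inv_perm N s' (\<lambda>x. f2 * x^2 + f1 * x + f0))"
        using start3[OF z N0 ipr pN2 _ _ ppq] ff by blast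
      then show ?thesis using Inv_equiv[OF e2 _ N0 pN ipr] by blast
    qed
    then show False using target1[OF pr p2 N0 pN2 assms(7) al] by blast
  qed
  show ?thesis using P1 P2 P3 by blast
qed

end
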